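(* Let $R=(S^0,\dots,S^T)$ be any $T$-covering in a symmetric congestion game in which every delay function is $f(x)=x$, and assume $\mathrm{OPT}>0$. Then $$\frac{C(S^T)}{\mathrm{OPT}}\le(2+2\sqrt2)\sqrt{\frac{C(S^0)}{\mathrm{OPT}}}.$$
   Context: A congestion game has players $N=\{1,\dots,n\}$, a finite resource set $E$ and strategy sets $\Sigma_i\subseteq 2^E$; it is symmetric if all $\Sigma_i$ equal a common set $\Sigma$. For a profile $S=(s_1,\dots,s_n)$, $n_e(S)=|\{i:e\in s_i\}|$. Here all delays are $f(x)=x$, so $c_i(S)=\sum_{e\in s_i}n_e(S)$ and $C(S)=\sum_i c_i(S)=\sum_{e\in E}n_e(S)^2$; $\mathrm{OPT}=\min_S C(S)$. A best response of player $i$ in $S$ is a strategy $s_i^b\in\Sigma_i$ minimizing $c_i(S_{-i},\cdot)$ (where $(S_{-i},s_i')$ replaces $s_i$ by $s_i'$); if no strategy strictly decreases $i$'s cost, the best response is $s_i$ itself. A $T$-covering is a sequence of profiles $R=(S^0,\dots,S^T)$ with players $\pi(1),\dots,\pi(T)$ such that for each $1\le t\le T$, $S^t=(S^{t-1}_{-\pi(t)},s')$ with $s'$ a best response of $\pi(t)$ in $S^{t-1}$, and every player occurs at least once among $\pi(1),\dots,\pi(T)$. *)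

theory Defs
  imports "HOL-Analysis.Analysis"
begin

text \<open>Symmetric congestion game with identity delays. Players are 1..n,
 a profile is a function from players to strategies (subsets of the resource set E),
 every player uses the common strategy set Sig.\<close>

definition load :: "nat \<Rightarrow> (nat \<Rightarrow> 'e set) \<Rightarrow> 'e \<Rightarrow> nat" where
  "load n S e = card {i \<in> {1..n}. e \<in> S i}"

definition pcost :: "nat \<Rightarrow> (nat \<Rightarrow> 'e set) \<Rightarrow> nat \<Rightarrow> nat" where
  "pcost n S i = (\<Sum>e\<in>S i. load n S e)"

definition social_cost :: "nat \<Rightarrow> (nat \<Rightarrow> 'e set) \<Rightarrow> nat" where
  "social_cost n S = (\<Sum>i\<in>{1..n}. pcost n S i)"

definition valid_profile :: "nat \<Rightarrow> 'e set set \<Rightarrow> (nat \<Rightarrow> 'e set) \<Rightarrow> bool" where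
  "valid_profile n Sig S \<longleftrightarrow> (\<forall>i\<in>{1..n}. S i \<in> Sig)"

definition OPT :: "nat \<Rightarrow> 'e set set \<Rightarrow> nat" where
  "OPT n Sig = (LEAST c. \<exists>S. valid_profile n Sig S \<and> c = social_cost n S)"

definition best_response :: "nat \<Rightarrow> 'e set set \<Rightarrow> (nat \<Rightarrow> 'e set) \<Rightarrow> nat \<Rightarrow> 'e set \<Rightarrow> bool" where
  "best_response n Sig S i s' \<longleftrightarrow>
     s' \<in> Sig \<and>
     (\<forall>s\<in>Sig. pcost n (S(i := s')) i \<le> pcost n (S(i := s)) i) \<and>
     ((\<forall>s\<in>Sig. pcost n S i \<le> pcost n (S(i := s)) i) \<longrightarrow> s' = S i)"

definition T_covering :: "nat \<Rightarrow> 'e set set \<Rightarrow> nat \<Rightarrow> (nat \<Rightarrow> nat \<Rightarrow> 'e set) \<Rightarrow> (nat \<Rightarrow> nat) \<Rightarrow> bool" where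
  "T_covering n Sig T R who \<longleftrightarrow>
     valid_profile n Sig (R 0) \<and>
     (\<forall>t\<in>{1..T}. who t \<in> {1..n} \<and>
        (\<exists>s'. best_response n Sig (R (t - 1)) (who t) s' \<and> R t = (R (t - 1))(who t := s'))) \<and>
     {1..n} \<subseteq> who ` {1..T}"

end

theory Submission
  imports Defs
begin

lemma sum_if_card:
  fixes c :: "'b::comm_semiring_1"
  assumes "finite N"
  shows "(\<Sum>i\<in>N. if P i then c else 0) = of_nat (card {i\<in>N. P i}) * c"
proof -
  have "(\<Sum>i\<in>N. if P i then c else 0) = (\<Sum>i\<in>N \<inter> {i. P i}. c)"
    using assms by (simp add: sum.If_cases)
  also have "\<dots> = of_nat (card {i\<in>N. P i}) * c"
    by (simp add: Collect_conj_eq)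
  finally show ?thesis .
qed

lemma sum_load:
  fixes f :: "'e \<Rightarrow> 'b::comm_semiring_1"
  assumes "finite E" "\<forall>i\<in>{1..n}. S i \<subseteq> E"
  shows "(\<Sum>i\<in>{1..n}. \<Sum>e\<in>S i. f e) = (\<Sum>e\<in>E. of_nat (load n S e) * f e)"
proof -
  have "(\<Sum>i\<in>{1..n}. \<Sum>e\<in>S i. f e) = (\<Sum>i\<in>{1..n}. \<Sum>e\<in>E. if e \<in> S i then f e else 0)"
  proof (rule sum.cong[OF refl])
    fix i assume "i \<in> {1..n}"
    then have "S i \<subseteq> E" using assms by auto
    then have "E \<inter> {e. e \<in> S i} = S i" by auto
    then show "(\<Sum>e\<in>S i. f e) = (\<Sum>e\<in>E. if e \<in> S i then f e else 0)"
      using assms(1) by (simp add: sum.inter_restrict[symmetric])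
  qed
  also have "\<dots> = (\<Sum>e\<in>E. \<Sum>i\<in>{1..n}. if e \<in> S i then f e else 0)"
    by (rule sum.swap)
  also have "\<dots> = (\<Sum>e\<in>E. of_nat (load n S e) * f e)"
    by (simp add: sum_if_card load_def)
  finally show ?thesis .
qed

lemma social_cost_sq:
  assumes "finite E" "\<forall>i\<in>{1..n}. S i \<subseteq> E"
  shows "social_cost n S = (\<Sum>e\<in>E. (load n S e)^2)"
  using sum_load[OF assms, of "load n S"]
  by (simp add: social_cost_def pcost_def power2_eq_square)

definition L0 :: "nat \<Rightarrow> (nat \<Rightarrow> 'e set) \<Rightarrow> nat \<Rightarrow> 'e \<Rightarrow> nat" where
  "L0 n S i e = card {j\<in>{1..n}-{i}. e \<in> S j}"

definition psi :: "nat \<Rightarrow> 'e set \<Rightarrow> (nat \<Rightarrow> 'e set) \<Rightarrow> nat" where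
  "psi n E S = (\<Sum>e\<in>E. load n S e * (load n S e + 1))"

lemma load_upd:
  assumes "i \<in> {1..n}"
  shows "load n (S(i:=s)) e = L0 n S i e + (if e \<in> s then 1 else 0)"
proof -
  have eq: "{j\<in>{1..n}. e \<in> (S(i:=s)) j} = {j\<in>{1..n}-{i}. e \<in> S j} \<union> (if e \<in> s then {i} else {})"
    using assms by auto
  show ?thesis unfolding load_def L0_def eq
    by (subst card_Un_disjoint) auto
qed

lemma L0_upd: "L0 n (S(i:=s)) i e = L0 n S i e"
  unfolding L0_def by (rule arg_cong[where f=card]) auto

lemma pcost_upd:
  assumes "i \<in> {1..n}"
  shows "pcost n (S(i:=s)) i = (\<Sum>e\<in>s. L0 n S i e + 1)"
  unfolding pcost_def by (rule sum.cong) (auto simp: load_upd[OF assms])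

lemma psi_upd:
  assumes "i \<in> {1..n}" "finite E" "s \<subseteq> E"
  shows "psi n E (S(i:=s)) = (\<Sum>e\<in>E. L0 n S i e * (L0 n S i e + 1)) + 2 * pcost n (S(i:=s)) i"
proof -
  have "psi n E (S(i:=s)) = (\<Sum>e\<in>E. L0 n S i e * (L0 n S i e + 1) + (if e \<in> s then 2 * (L0 n S i e + 1) else 0))"
    unfolding psi_def load_upd[OF assms(1)] by (rule sum.cong) (auto simp: algebra_simps)
  also have "\<dots> = (\<Sum>e\<in>E. L0 n S i e * (L0 n S i e + 1)) + (\<Sum>e\<in>E. if e \<in> s then 2 * (L0 n S i e + 1) else 0)"
    by (rule sum.distrib)
  also have "(\<Sum>e\<in>E. if e \<in> s then 2 * (L0 n S i e + 1) else 0) = (\<Sum>e\<in>s. 2 * (L0 n S i e + 1))"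
  proof -
    have "E \<inter> {e. e \<in> s} = s" using assms by auto
    then show ?thesis using assms(2) by (simp add: sum.If_cases)
  qed
  also have "\<dots> = 2 * pcost n (S(i:=s)) i"
    by (simp add: pcost_upd[OF assms(1)] sum_distrib_left)
  finally show ?thesis .
qed

lemma psi_step:
  assumes "i \<in> {1..n}" "finite E" "s \<subseteq> E" "S i \<subseteq> E"
    and "pcost n (S(i:=s)) i \<le> pcost n (S(i:=S i)) i"
  shows "psi n E (S(i:=s)) \<le> psi n E S"
  using psi_upd[OF assms(1,2,3), of S] psi_upd[OF assms(1,2,4), of S] assms(5) by simp

lemma pcost_dev:
  assumes "i \<in> {1..n}"
  shows "pcost n (S(i:=s)) i \<le> (\<Sum>e\<in>s. load n S e + 1)"
proof -
  have "L0 n S i e \<le> load n S e" for e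
    unfolding L0_def load_def by (rule card_mono) auto
  then show ?thesis unfolding pcost_upd[OF assms] by (intro sum_mono) auto
qed

lemma sum_ind_swap:
  assumes "finite E" "F j \<subseteq> E" "finite N"
  shows "(\<Sum>e\<in>F j. card {i\<in>N. e \<in> F i \<and> Q i}) =
    (\<Sum>e\<in>E. \<Sum>i\<in>N. if e \<in> F j \<and> e \<in> F i \<and> Q i then 1 else (0::nat))"
proof -
  have "(\<Sum>i\<in>N. if e \<in> F j \<and> e \<in> F i \<and> Q i then 1 else (0::nat)) =
     (if e \<in> F j then card {i\<in>N. e \<in> F i \<and> Q i} else 0)" for e
    using assms(3) by (simp add: sum_if_card)
  then have "(\<Sum>e\<in>E. \<Sum>i\<in>N. if e \<in> F j \<and> e \<in> F i \<and> Q i then 1 else (0::nat))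
     = (\<Sum>e\<in>E. if e \<in> F j then card {i\<in>N. e \<in> F i \<and> Q i} else 0)" by simp
  also have "\<dots> = (\<Sum>e\<in>F j. card {i\<in>N. e \<in> F i \<and> Q i})"
  proof -
    have "E \<inter> {e. e \<in> F j} = F j" using assms by auto
    then show ?thesis using assms(1) by (simp add: sum.If_cases)
  qed
  finally show ?thesis by simp
qed

lemma final_comb:
  fixes lt :: "nat \<Rightarrow> nat" and c :: "nat \<Rightarrow> nat"
  assumes "finite E" "\<forall>j\<in>N. F j \<subseteq> E" "inj_on lt N" "finite N"
    and "\<forall>j\<in>N. (\<Sum>e\<in>F j. 1 + card {i\<in>N. e \<in> F i \<and> lt i < lt j}) \<le> c j"
  shows "(\<Sum>j\<in>N. \<Sum>e\<in>F j. card {i\<in>N. e \<in> F i}) \<le> 2 * (\<Sum>j\<in>N. c j)"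
proof -
  define G where "G = (\<lambda>j e i. if e \<in> F j \<and> e \<in> F i \<and> lt i < lt j then 1 else (0::nat))"
  have split: "card {i\<in>N. e \<in> F i} = 1 + card {i\<in>N. e \<in> F i \<and> lt i < lt j} + card {i\<in>N. e \<in> F i \<and> lt j < lt i}"
    if "j \<in> N" "e \<in> F j" for j e
  proof -
    have eq: "{i\<in>N. e \<in> F i} = {j} \<union> {i\<in>N. e \<in> F i \<and> lt i < lt j} \<union> {i\<in>N. e \<in> F i \<and> lt j < lt i}"
    proof -
      have "i = j" if "i \<in> N" "lt i = lt j" for i
        using assms(3) that \<open>j \<in> N\<close> by (auto dest: inj_onD)
      then show ?thesis using that by (auto, metis linorder_neqE_nat)
    qed
    show ?thesis unfolding eq using assms(4)
      by (subst card_Un_disjoint, auto)+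
  qed
  have "(\<Sum>j\<in>N. \<Sum>e\<in>F j. card {i\<in>N. e \<in> F i}) =
     (\<Sum>j\<in>N. card (F j) + (\<Sum>e\<in>F j. card {i\<in>N. e \<in> F i \<and> lt i < lt j}) + (\<Sum>e\<in>F j. card {i\<in>N. e \<in> F i \<and> lt j < lt i}))"
  proof (rule sum.cong[OF refl])
    fix j assume j: "j \<in> N"
    have "(\<Sum>e\<in>F j. card {i\<in>N. e \<in> F i}) = (\<Sum>e\<in>F j. 1 + card {i\<in>N. e \<in> F i \<and> lt i < lt j} + card {i\<in>N. e \<in> F i \<and> lt j < lt i})"
      using split j by (intro sum.cong) auto
    also have "\<dots> = card (F j) + (\<Sum>e\<in>F j. card {i\<in>N. e \<in> F i \<and> lt i < lt j}) + (\<Sum>e\<in>F j. card {i\<in>N. e \<in> F i \<and> lt j < lt i})"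
      by (simp only: sum.distrib) simp
    finally show "(\<Sum>e\<in>F j. card {i\<in>N. e \<in> F i}) = card (F j) + (\<Sum>e\<in>F j. card {i\<in>N. e \<in> F i \<and> lt i < lt j}) + (\<Sum>e\<in>F j. card {i\<in>N. e \<in> F i \<and> lt j < lt i})" .
  qed
  also have "\<dots> = (\<Sum>j\<in>N. card (F j)) + (\<Sum>j\<in>N. \<Sum>e\<in>E. \<Sum>i\<in>N. G j e i) + (\<Sum>j\<in>N. \<Sum>e\<in>E. \<Sum>i\<in>N. G i e j)"
  proof -
    have "(\<Sum>e\<in>F j. card {i\<in>N. e \<in> F i \<and> lt i < lt j}) = (\<Sum>e\<in>E. \<Sum>i\<in>N. G j e i)" if "j \<in> N" for j
      unfolding G_def using sum_ind_swap[OF assms(1) _ assms(4), of F j "\<lambda>i. lt i < lt j"] assms(2) that by simp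
    moreover have "(\<Sum>e\<in>F j. card {i\<in>N. e \<in> F i \<and> lt j < lt i}) = (\<Sum>e\<in>E. \<Sum>i\<in>N. G i e j)" if "j \<in> N" for j
      unfolding G_def using sum_ind_swap[OF assms(1) _ assms(4), of F j "\<lambda>i. lt j < lt i"] assms(2) that
      by (simp add: conj_commute conj_left_commute)
    ultimately show ?thesis by (simp add: sum.distrib)
  qed
  also have "(\<Sum>j\<in>N. \<Sum>e\<in>E. \<Sum>i\<in>N. G i e j) = (\<Sum>j\<in>N. \<Sum>e\<in>E. \<Sum>i\<in>N. G j e i)"
  proof -
    have "(\<Sum>j\<in>N. \<Sum>e\<in>E. \<Sum>i\<in>N. G i e j) = (\<Sum>j\<in>N. \<Sum>i\<in>N. \<Sum>e\<in>E. G i e j)"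
      by (rule sum.cong[OF refl], rule sum.swap)
    also have "\<dots> = (\<Sum>i\<in>N. \<Sum>j\<in>N. \<Sum>e\<in>E. G i e j)" by (rule sum.swap)
    also have "\<dots> = (\<Sum>i\<in>N. \<Sum>e\<in>E. \<Sum>j\<in>N. G i e j)"
      by (rule sum.cong[OF refl], rule sum.swap)
    finally show ?thesis .
  qed
  also have "(\<Sum>j\<in>N. card (F j)) + (\<Sum>j\<in>N. \<Sum>e\<in>E. \<Sum>i\<in>N. G j e i) + (\<Sum>j\<in>N. \<Sum>e\<in>E. \<Sum>i\<in>N. G j e i)
      \<le> 2 * ((\<Sum>j\<in>N. card (F j)) + (\<Sum>j\<in>N. \<Sum>e\<in>E. \<Sum>i\<in>N. G j e i))" by simp
  also have "(\<Sum>j\<in>N. card (F j)) + (\<Sum>j\<in>N. \<Sum>e\<in>E. \<Sum>i\<in>N. G j e i) = (\<Sum>j\<in>N. \<Sum>e\<in>F j. 1 + card {i\<in>N. e \<in> F i \<and> lt i < lt j})"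
  proof -
    have "(\<Sum>e\<in>F j. card {i\<in>N. e \<in> F i \<and> lt i < lt j}) = (\<Sum>e\<in>E. \<Sum>i\<in>N. G j e i)" if "j \<in> N" for j
      unfolding G_def using sum_ind_swap[OF assms(1) _ assms(4), of F j "\<lambda>i. lt i < lt j"] assms(2) that by simp
    then have "(\<Sum>j\<in>N. \<Sum>e\<in>F j. 1 + card {i\<in>N. e \<in> F i \<and> lt i < lt j}) = (\<Sum>j\<in>N. card (F j) + (\<Sum>e\<in>E. \<Sum>i\<in>N. G j e i))"
      by (intro sum.cong refl) (simp only: sum.distrib, simp)
    then show ?thesis by (simp add: sum.distrib)
  qed
  also have "\<dots> \<le> (\<Sum>j\<in>N. c j)" using assms(5) by (intro sum_mono) auto
  finally show ?thesis by simp
qed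

theorem lemma6:
  fixes n T :: nat and E :: "'e set" and Sig :: "'e set set"
    and R :: "nat \<Rightarrow> nat \<Rightarrow> 'e set" and who :: "nat \<Rightarrow> nat"
  assumes "n \<ge> 1" and "finite E" and "Sig \<subseteq> Pow E" and "Sig \<noteq> {}"
    and "T_covering n Sig T R who"
    and "OPT n Sig > 0"
  shows "real (social_cost n (R T)) / real (OPT n Sig)
           \<le> (2 + 2 * sqrt 2) * sqrt (real (social_cost n (R 0)) / real (OPT n Sig))"
proof -
  define N where "N = {1..n}"
  have finN: "finite N" unfolding N_def by simp
  from assms(5) have v0: "valid_profile n Sig (R 0)"
    and stp: "\<And>t. t \<in> {1..T} \<Longrightarrow> who t \<in> N \<and>
        (\<exists>s'. best_response n Sig (R (t - 1)) (who t) s' \<and> R t = (R (t - 1))(who t := s'))"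
    and cov: "N \<subseteq> who ` {1..T}"
    unfolding T_covering_def N_def by auto
  have valid: "valid_profile n Sig (R t)" if "t \<le> T" for t
    using that
  proof (induction t)
    case 0 then show ?case using v0 by simp
  next
    case (Suc t)
    then obtain s' where "best_response n Sig (R t) (who (Suc t)) s'" "R (Suc t) = (R t)(who (Suc t) := s')"
      using stp[of "Suc t"] by auto
    then show ?case using Suc unfolding valid_profile_def best_response_def by auto
  qed
  have inE: "R t i \<subseteq> E" if "t \<le> T" "i \<in> N" for t i
    using valid[OF that(1)] that(2) assms(3) unfolding valid_profile_def N_def by fastforce
  have psi_mono: "psi n E (R t) \<le> psi n E (R 0)" if "t \<le> T" for t
    using that
  proof (induction t)
    case 0 then show ?case by simp
  next
    case (Suc t)
    obtain s' where br: "best_response n Sig (R t) (who (Suc t)) s'" and rt: "R (Suc t) = (R t)(who (Suc t) := s')"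
      and w: "who (Suc t) \<in> N"
      using stp[of "Suc t"] Suc by auto
    have "R t (who (Suc t)) \<in> Sig" using valid[of t] Suc w unfolding valid_profile_def N_def by auto
    then have le: "pcost n ((R t)(who (Suc t) := s')) (who (Suc t)) \<le> pcost n ((R t)(who (Suc t) := R t (who (Suc t)))) (who (Suc t))"
      using br unfolding best_response_def by blast
    have "s' \<subseteq> E" using br assms(3) unfolding best_response_def by auto
    then have "psi n E (R (Suc t)) \<le> psi n E (R t)"
      unfolding rt using psi_step[OF _ assms(2) _ _ le] w inE[of t "who (Suc t)"] Suc unfolding N_def by auto
    then show ?case using Suc by simp
  qed
  define C0 where "C0 = social_cost n (R 0)"
  have inE0: "\<forall>i\<in>{1..n}. R t i \<subseteq> E" if "t \<le> T" for t
    using inE[OF that] unfolding N_def by auto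
  have psi_sc: "psi n E S = social_cost n S + (\<Sum>e\<in>E. load n S e)" if "\<forall>i\<in>{1..n}. S i \<subseteq> E" for S
    unfolding psi_def social_cost_sq[OF assms(2) that] by (simp add: sum.distrib[symmetric] algebra_simps power2_eq_square)
  have CT: "social_cost n (R t) \<le> 2 * C0" if "t \<le> T" for t
  proof -
    have "(\<Sum>e\<in>E. load n (R 0) e) \<le> (\<Sum>e\<in>E. (load n (R 0) e)^2)"
      by (intro sum_mono) (simp add: power2_eq_square le_square)
    then have "psi n E (R 0) \<le> 2 * C0"
      unfolding C0_def psi_sc[OF inE0[OF le0]] social_cost_sq[OF assms(2) inE0[OF le0]] by simp
    then show ?thesis using psi_mono[OF that] psi_sc[OF inE0[OF that]] by simp
  qed
  have exv: "\<exists>c S. valid_profile n Sig S \<and> c = social_cost n S"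
    using v0 by blast
  obtain Op where vO: "valid_profile n Sig Op" and OPTeq: "OPT n Sig = social_cost n Op"
    using LeastI_ex[OF exv] unfolding OPT_def by blast
  have OPTle: "OPT n Sig \<le> social_cost n S" if "valid_profile n Sig S" for S
    unfolding OPT_def using that by (intro Least_le) blast
  have OpinE: "\<forall>i\<in>{1..n}. Op i \<subseteq> E" using vO assms(3) unfolding valid_profile_def by fastforce
  define lt where "lt i = Max {t\<in>{1..T}. who t = i}" for i
  have lt: "lt i \<in> {1..T} \<and> who (lt i) = i \<and> (\<forall>t\<in>{1..T}. who t = i \<longrightarrow> t \<le> lt i)" if "i \<in> N" for i
  proof -
    have ne: "{t\<in>{1..T}. who t = i} \<noteq> {}" using cov that by force
    have fin: "finite {t\<in>{1..T}. who t = i}" by simp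
    have "lt i \<in> {t\<in>{1..T}. who t = i}" unfolding lt_def by (rule Max_in[OF fin ne])
    moreover have "\<forall>t\<in>{1..T}. who t = i \<longrightarrow> t \<le> lt i" unfolding lt_def using Max_ge[OF fin] by blast
    ultimately show ?thesis by blast
  qed
  have inj: "inj_on lt N"
  proof (rule inj_onI)
    fix x y assume "x \<in> N" "y \<in> N" "lt x = lt y"
    then have "who (lt x) = x" "who (lt y) = y" using lt[of x] lt[of y] by blast+
    then show "x = y" using \<open>lt x = lt y\<close> by metis
  qed
  have persist: "R (lt i + k) i = R (lt i) i" if "i \<in> N" "lt i + k \<le> T" for i k
    using that(2)
  proof (induction k)
    case 0 then show ?case by simp
  next
    case (Suc k)
    have t1: "Suc (lt i + k) \<in> {1..T}" using Suc by auto
    then obtain s' where "R (Suc (lt i + k)) = (R (lt i + k))(who (Suc (lt i + k)) := s')"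
      using stp[OF t1] by auto
    moreover have "who (Suc (lt i + k)) \<noteq> i"
    proof
      assume "who (Suc (lt i + k)) = i"
      then have "Suc (lt i + k) \<le> lt i" using lt[OF that(1)] t1 by blast
      then show False by simp
    qed
    ultimately show ?case using Suc by simp
  qed
  have persist': "R t i = R (lt i) i" if "i \<in> N" "lt i \<le> t" "t \<le> T" for i t
  proof -
    have e: "lt i + (t - lt i) = t" using that by simp
    show ?thesis using persist[OF that(1), of "t - lt i"] that(3) unfolding e by blast
  qed
  define F where "F = R T"
  define c where "c j = pcost n (R (lt j)) j" for j
  have lower: "(\<Sum>e\<in>F j. 1 + card {i\<in>N. e \<in> F i \<and> lt i < lt j}) \<le> c j" if j: "j \<in> N" for j
  proof -
    have ltj: "lt j \<le> T" using lt[OF j] by auto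
    have Fj: "R (lt j) j = F j" unfolding F_def using persist'[OF j ltj order.refl] by simp
    have "1 + card {i\<in>N. e \<in> F i \<and> lt i < lt j} \<le> load n (R (lt j)) e" if e: "e \<in> F j" for e
    proof -
      have "insert j {i\<in>N. e \<in> F i \<and> lt i < lt j} \<subseteq> {i\<in>{1..n}. e \<in> R (lt j) i}"
      proof
        fix i assume "i \<in> insert j {i\<in>N. e \<in> F i \<and> lt i < lt j}"
        then consider "i = j" | "i \<in> N" "e \<in> F i" "lt i < lt j" by auto
        then show "i \<in> {i\<in>{1..n}. e \<in> R (lt j) i}"
        proof cases
          case 1 then show ?thesis using j e Fj N_def by auto
        next
          case 2
          have "R (lt j) i = R (lt i) i" using persist'[OF 2(1), of "lt j"] 2(3) ltj by simp
          also have "\<dots> = F i" unfolding F_def using persist'[OF 2(1), of T] 2(3) ltj by simp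
          finally show ?thesis using 2 N_def by auto
        qed
      qed
      then have "card (insert j {i\<in>N. e \<in> F i \<and> lt i < lt j}) \<le> load n (R (lt j)) e"
        unfolding load_def by (intro card_mono) auto
      then show ?thesis using finN by simp
    qed
    then have "(\<Sum>e\<in>F j. 1 + card {i\<in>N. e \<in> F i \<and> lt i < lt j}) \<le> (\<Sum>e\<in>F j. load n (R (lt j)) e)"
      by (intro sum_mono) auto
    then show ?thesis unfolding c_def pcost_def Fj .
  qed
  have upper: "n * c j \<le> (\<Sum>e\<in>E. load n Op e * (load n (R (lt j - 1)) e + 1)) \<and> lt j - 1 \<le> T" if j: "j \<in> N" for j
  proof -
    define P where "P = R (lt j - 1)"
    have t1: "lt j \<in> {1..T}" using lt[OF j] by auto
    obtain s' where br: "best_response n Sig P j s'" and rt: "R (lt j) = P(j := s')"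
      using stp[OF t1] lt[OF j] unfolding P_def by auto
    have "c j \<le> (\<Sum>e\<in>Op k. load n P e + 1)" if k: "k \<in> N" for k
    proof -
      have "Op k \<in> Sig" using vO k unfolding valid_profile_def N_def by auto
      then have "pcost n (P(j := s')) j \<le> pcost n (P(j := Op k)) j" using br unfolding best_response_def by blast
      then have "c j \<le> pcost n (P(j := Op k)) j" unfolding c_def rt .
      also have "\<dots> \<le> (\<Sum>e\<in>Op k. load n P e + 1)" by (rule pcost_dev) (use j N_def in simp)
      finally show ?thesis .
    qed
    then have "(\<Sum>k\<in>N. c j) \<le> (\<Sum>k\<in>N. \<Sum>e\<in>Op k. load n P e + 1)" by (intro sum_mono) auto
    also have "\<dots> = (\<Sum>e\<in>E. load n Op e * (load n P e + 1))"
      unfolding N_def using sum_load[OF assms(2) OpinE, of "\<lambda>e. load n P e + 1"] by simp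
    finally have "n * c j \<le> (\<Sum>e\<in>E. load n Op e * (load n P e + 1))" unfolding N_def by simp
    moreover have "lt j - 1 \<le> T" using t1 by auto
    ultimately show ?thesis unfolding P_def by simp
  qed
  have CTc: "social_cost n F \<le> 2 * (\<Sum>j\<in>N. c j)"
  proof -
    have "social_cost n F = (\<Sum>j\<in>N. \<Sum>e\<in>F j. card {i\<in>N. e \<in> F i})"
      unfolding social_cost_def pcost_def load_def N_def ..
    also have "\<dots> \<le> 2 * (\<Sum>j\<in>N. c j)"
    proof (rule final_comb[OF assms(2) _ inj finN])
      show "\<forall>j\<in>N. F j \<subseteq> E" unfolding F_def using inE[OF order.refl] by blast
      show "\<forall>j\<in>N. (\<Sum>e\<in>F j. 1 + card {i \<in> N. e \<in> F i \<and> lt i < lt j}) \<le> c j" using lower by blast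
    qed
    finally show ?thesis .
  qed
  define a where "a = real (OPT n Sig)"
  define b where "b = real C0"
  have apos: "a > 0" unfolding a_def using assms(6) by simp
  have ab: "a \<le> b" unfolding a_def b_def C0_def using OPTle[OF v0] by simp
  have aO: "a = (\<Sum>e\<in>E. real (load n Op e)^2)"
    unfolding a_def OPTeq social_cost_sq[OF assms(2) OpinE] by simp
  have perj: "real n * real (c j) \<le> sqrt (2 * a * b) + a" if j: "j \<in> N" for j
  proof -
    define P where "P = R (lt j - 1)"
    have up: "n * c j \<le> (\<Sum>e\<in>E. load n Op e * (load n P e + 1))" and tP: "lt j - 1 \<le> T"
      using upper[OF j] unfolding P_def by auto
    have CP: "(\<Sum>e\<in>E. real (load n P e)^2) \<le> 2 * b"
    proof -
      have "social_cost n P \<le> 2 * C0" using CT[OF tP] unfolding P_def .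
      then have "real (social_cost n P) \<le> 2 * b" unfolding b_def by simp
      moreover have "social_cost n P = (\<Sum>e\<in>E. (load n P e)^2)"
        unfolding P_def by (rule social_cost_sq[OF assms(2) inE0[OF tP]])
      ultimately show ?thesis by simp
    qed
    have s1: "(\<Sum>e\<in>E. real (load n Op e)) \<le> a"
      unfolding aO
    proof (intro sum_mono)
      fix e
      have "load n Op e \<le> load n Op e * load n Op e" by (rule le_square)
      then have "real (load n Op e) \<le> real (load n Op e * load n Op e)" by (rule of_nat_mono)
      then show "real (load n Op e) \<le> real (load n Op e)^2" by (simp add: power2_eq_square)
    qed
    have "(\<Sum>e\<in>E. real (load n Op e) * real (load n P e))^2 \<le> a * (2 * b)"
      using Cauchy_Schwarz_ineq_sum[of "\<lambda>e. real (load n Op e)" "\<lambda>e. real (load n P e)" E]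
        CP apos aO by (smt (verit) mult_left_mono sum_nonneg zero_le_power2)
    then have s2: "(\<Sum>e\<in>E. real (load n Op e) * real (load n P e)) \<le> sqrt (2 * a * b)"
      by (intro real_le_rsqrt) (simp add: algebra_simps)
    have "real (n * c j) \<le> real (\<Sum>e\<in>E. load n Op e * (load n P e + 1))"
      using up by linarith
    also have "\<dots> = (\<Sum>e\<in>E. real (load n Op e) * real (load n P e)) + (\<Sum>e\<in>E. real (load n Op e))"
      by (simp add: sum.distrib algebra_simps)
    finally show ?thesis using s1 s2 by simp
  qed
  define X where "X = sqrt (2 * a * b) + a"
  have npos: "real n > 0" using assms(1) by simp
  have "real n * (\<Sum>j\<in>N. real (c j)) \<le> real n * X"
  proof -
    have "real n * (\<Sum>j\<in>N. real (c j)) = (\<Sum>j\<in>N. real n * real (c j))" by (simp add: sum_distrib_left)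
    also have "\<dots> \<le> (\<Sum>j\<in>N. X)" using perj unfolding X_def by (intro sum_mono) auto
    also have "\<dots> = real n * X" unfolding N_def by simp
    finally show ?thesis .
  qed
  then have sumc: "(\<Sum>j\<in>N. real (c j)) \<le> X" using npos by simp
  have CTr: "real (social_cost n (R T)) \<le> 2 * X"
  proof -
    have "real (social_cost n (R T)) \<le> 2 * real (\<Sum>j\<in>N. c j)" using CTc unfolding F_def
      by (metis of_nat_le_iff of_nat_mult of_nat_numeral)
    then show ?thesis using sumc by simp
  qed
  have sq: "sqrt (2 * a * b) = sqrt 2 * a * sqrt (b / a)"
  proof -
    have "2 * a * b = 2 * (a * a) * (b / a)" using apos by (simp add: field_simps)
    then have "sqrt (2 * a * b) = sqrt (2 * (a * a) * (b / a))" by (simp only:)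
    also have "\<dots> = sqrt 2 * sqrt (a * a) * sqrt (b / a)" by (simp only: real_sqrt_mult)
    also have "sqrt (a * a) = a" using apos by (simp add: real_sqrt_abs2)
    finally show ?thesis .
  qed
  have g1: "sqrt (b / a) \<ge> 1" using ab apos by simp
  have "real (social_cost n (R T)) / a \<le> 2 * X / a" using CTr apos by (simp add: divide_right_mono)
  also have "2 * X / a = 2 * sqrt 2 * sqrt (b / a) + 2" unfolding X_def sq using apos by (simp add: field_simps)
  also have "\<dots> \<le> (2 + 2 * sqrt 2) * sqrt (b / a)" using g1 by (simp add: algebra_simps)
  finally show ?thesis unfolding a_def b_def C0_def .
qed

end
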